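(* Let $X \subset \mathbb{R}^{2n}$ be a symplectically self-polar convex body with $C^1$-smooth boundary, and let $T$ be the symplectic outer billiard map of $X$. Then for every $x\in\partial X$ the four points $$z_1=x+f(x),\quad z_2=-x+f(x),\quad z_3=-x-f(x),\quad z_4=x-f(x)$$ are the vertices of a parallelogram of symplectic area $4$, and they form a centrally symmetric closed orbit of $T$: $Tz_i=z_{i+1}$ for $i=1,\dots,4$, with $z_5=z_1$.
   Context: $\mathbb{R}^{2n}\cong\mathbb{C}^n$, $J$ is multiplication by $\sqrt{-1}$, $\omega(u,v)=\langle Ju,v\rangle$. For a convex body $X$ with origin in its interior, $X^\omega=\{y: \omega(x,y)\le 1\ \forall x\in X\}$; $X$ is symplectically self-polar if $X=X^\omega$ (such $X$ is centrally symmetric and, with $C^1$ boundary, strictly convex). For $C^1$ boundary, $f\colon\partial X\to\partial X^\omega$ assigns to $x$ the unique $f(x)\in X^\omega$ with $\omega(x,f(x))=1$. The characteristic line of $\partial X$ at $x$ is $\ker(\omega|_{T_x\partial X})$, spanned by $Jn(x)$ where $n(x)$ is the outer unit normal. Symplectic outer billiard map: for a strictly convex body $X$ with $C^1$ boundary and $z\in\mathbb{R}^{2n}\setminus X$, there is a unique $x\in\partial X$ such that the line through $z$ and $x$ is the characteristic line of $\partial X$ at $x$ and $\omega(x,x-z)>0$; then $T(z)=2x-z$. $T$ is a bijection of $\mathbb{R}^{2n}\setminus X$. *)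

theory Defs
  imports "HOL-Analysis.Analysis"
begin

text \<open>R^{2n} is identified with C^n, modelled as the type complex^'n
  (a euclidean space of real dimension 2n; its inner product is the real part
  of the Hermitian product).\<close>

definition cJ :: "complex ^ 'n \<Rightarrow> complex ^ 'n" where
  "cJ u = (\<chi> i. \<i> * (u $ i))"

definition omega :: "complex ^ 'n \<Rightarrow> complex ^ 'n \<Rightarrow> real" where
  "omega u v = inner (cJ u) v"

definition convex_body :: "'a::euclidean_space set \<Rightarrow> bool" where
  "convex_body X \<longleftrightarrow> compact X \<and> convex X \<and> interior X \<noteq> {}"

definition sym_polar :: "(complex ^ 'n) set \<Rightarrow> (complex ^ 'n) set" where
  "sym_polar X = {y. \<forall>x\<in>X. omega x y \<le> 1}"

definition sym_self_polar :: "(complex ^ 'n) set \<Rightarrow> bool" where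
  "sym_self_polar X \<longleftrightarrow> convex_body X \<and> 0 \<in> interior X \<and> X = sym_polar X"

definition C1_boundary :: "'a::euclidean_space set \<Rightarrow> bool" where
  "C1_boundary X \<longleftrightarrow> (\<forall>x\<in>frontier X. \<exists>U g G.
      open U \<and> x \<in> U \<and>
      (\<forall>y\<in>U. (g has_derivative (\<lambda>h. inner (G y) h)) (at y)) \<and>
      continuous_on U G \<and> G x \<noteq> 0 \<and>
      X \<inter> U = {y\<in>U. g y \<le> 0})"

definition outer_normal :: "'a::euclidean_space set \<Rightarrow> 'a \<Rightarrow> 'a" where
  "outer_normal X x = (THE nv. norm nv = 1 \<and> (\<forall>y\<in>X. inner nv (y - x) \<le> 0))"

definition polar_map :: "(complex ^ 'n) set \<Rightarrow> complex ^ 'n \<Rightarrow> complex ^ 'n" where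
  "polar_map X x = (THE y. y \<in> sym_polar X \<and> omega x y = 1)"

text \<open>Symplectic outer billiard map (meaningful for z outside X): reflect z in
  the unique boundary point x whose characteristic line passes through z, with
  omega(x, x - z) > 0.\<close>
definition outer_billiard :: "(complex ^ 'n) set \<Rightarrow> complex ^ 'n \<Rightarrow> complex ^ 'n" where
  "outer_billiard X z =
     (let x = (THE x. x \<in> frontier X \<and>
                 (\<exists>t::real. z - x = t *\<^sub>R cJ (outer_normal X x)) \<and>
                 omega x (x - z) > 0)
      in 2 *\<^sub>R x - z)"

end

theory Submission
  imports Defs
begin


lemma cJ_comp: "cJ u $ i = \<i> * (u $ i)" by (simp add: cJ_def)

lemma cJ_add: "cJ (a + b) = cJ a + cJ b"
  by (simp add: vec_eq_iff cJ_comp distrib_left)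
lemma cJ_scale: "cJ (r *\<^sub>R a) = r *\<^sub>R cJ a"
  by (simp add: vec_eq_iff cJ_comp scaleR_conv_of_real)
lemma cJ_minus: "cJ (- a) = - cJ a"
  by (simp add: vec_eq_iff cJ_comp)
lemma cJ_diff: "cJ (a - b) = cJ a - cJ b"
  by (simp add: vec_eq_iff cJ_comp right_diff_distrib)
lemma cJ_cJ: "cJ (cJ a) = - a"
  by (simp add: vec_eq_iff cJ_comp)
lemma inner_cJ_swap: "inner (cJ a) b = - inner a (cJ b)"
  by (simp add: inner_vec_def cJ_comp inner_complex_def sum_negf[symmetric] algebra_simps)
lemma inner_cJ_cJ: "inner (cJ a) (cJ b) = inner a b"
  by (simp add: inner_cJ_swap cJ_cJ)
lemma norm_cJ: "norm (cJ a) = norm a"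
  by (simp add: norm_eq_sqrt_inner inner_cJ_cJ)
lemma cJ_eq0: "cJ a = 0 \<longleftrightarrow> a = 0"
  by (metis cJ_cJ neg_0_equal_iff_equal norm_cJ norm_eq_zero)

lemma omega_antisym: "omega a b = - omega b a"
  unfolding omega_def by (metis inner_cJ_swap inner_commute)
lemma omega_self[simp]: "omega a a = 0"
  using omega_antisym[of a a] by simp
lemma omega_add_left[simp]: "omega (a + b) c = omega a c + omega b c"
  by (simp add: omega_def cJ_add inner_add_left)
lemma omega_add_right[simp]: "omega c (a + b) = omega c a + omega c b"
  by (simp add: omega_def inner_add_right)
lemma omega_diff_left[simp]: "omega (a - b) c = omega a c - omega b c"
  by (simp add: omega_def cJ_diff inner_diff_left)
lemma omega_diff_right[simp]: "omega c (a - b) = omega c a - omega c b"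
  by (simp add: omega_def inner_diff_right)
lemma omega_minus_left[simp]: "omega (- a) c = - omega a c"
  by (simp add: omega_def cJ_minus)
lemma omega_minus_right[simp]: "omega c (- a) = - omega c a"
  by (simp add: omega_def)
lemma omega_scale_left[simp]: "omega (r *\<^sub>R a) c = r * omega a c"
  by (simp add: omega_def cJ_scale)
lemma omega_scale_right[simp]: "omega c (r *\<^sub>R a) = r * omega c a"
  by (simp add: omega_def)
lemma cJ_zero[simp]: "cJ 0 = 0" by (simp add: vec_eq_iff cJ_comp)
lemma omega_zero[simp]: "omega 0 a = 0" "omega a 0 = 0"
  by (simp_all add: omega_def)



lemma small_le0: fixes x K :: real assumes "\<And>e. e > 0 \<Longrightarrow> x \<le> e * K" shows "x \<le> 0"
proof (rule ccontr)
  assume "\<not> x \<le> 0" hence x: "x > 0" by simp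
  show False
  proof (cases "K \<le> 0")
    case True then show ?thesis using assms[of 1] x by simp
  next
    case False
    have "x \<le> (x / (2*K)) * K" using assms[of "x/(2*K)"] x False by simp
    also have "\<dots> = x/2" using False by simp
    finally show ?thesis using x by simp
  qed
qed

lemma normal_dir:
  fixes X :: "'a::euclidean_space set"
  assumes C1: "C1_boundary X" and u: "u \<in> frontier X" and cl: "closed X"
  shows "\<exists>a. a \<noteq> 0 \<and> (\<forall>v. (\<forall>y\<in>X. inner v (y - u) \<le> 0) \<longrightarrow> (\<exists>c\<ge>0. v = c *\<^sub>R a))"
proof -
  obtain U g G where U: "open U" "u \<in> U" and dg: "\<forall>y\<in>U. (g has_derivative (\<lambda>h. inner (G y) h)) (at y)"
    and G0: "G u \<noteq> 0" and XU: "X \<inter> U = {y\<in>U. g y \<le> 0}"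
    using C1[unfolded C1_boundary_def, rule_format, OF u] by (elim exE conjE) blast
  have uX: "u \<in> X" using u cl by (simp add: frontier_def closure_closed)
  have gu: "g u \<le> 0" using uX U XU by blast
  define a where "a = G u"
  have key: "inner v h \<le> 0" if nv: "\<forall>y\<in>X. inner v (y - u) \<le> 0" and h: "inner a h < 0" for v h
  proof -
    have d1: "((\<lambda>t::real. u + t *\<^sub>R h) has_derivative (\<lambda>t. t *\<^sub>R h)) (at 0)"
      by (auto intro!: derivative_eq_intros)
    have d2: "(g has_derivative (\<lambda>k. inner a k)) (at (u + 0 *\<^sub>R h))"
      using dg U unfolding a_def by simp
    have "((\<lambda>t. g (u + t *\<^sub>R h)) has_derivative (\<lambda>t. inner a h * t)) (at 0)"
      using has_derivative_compose[OF d1 d2] by (simp add: o_def mult.commute)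
    hence "((\<lambda>t. g (u + t *\<^sub>R h)) has_real_derivative inner a h) (at 0)"
      by (simp add: has_field_derivative_def)
    from DERIV_neg_dec_right[OF this h] obtain d where d0: "d > 0"
      and dd: "\<forall>s>0. s < d \<longrightarrow> g (u + 0 *\<^sub>R h) > g (u + (0 + s) *\<^sub>R h)"
      by blast
    have d: "d > 0" "\<And>t. t > 0 \<Longrightarrow> t < d \<Longrightarrow> g (u + t *\<^sub>R h) < g u"
      using d0 dd by auto
    obtain e where e: "e > 0" "ball u e \<subseteq> U" using U by (meson open_contains_ball)
    define t where "t = min (d/2) (e / (2 * (norm h + 1)))"
    have ep: "e / (2 * (norm h + 1)) > 0" using e(1) by (smt (verit) divide_pos_pos norm_ge_zero)
    have t: "t > 0" "t < d" using d ep by (auto simp: t_def simp del: mult_2 distrib_left)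
    have "norm (t *\<^sub>R h) < e"
    proof -
      have "norm (t *\<^sub>R h) = t * norm h" using t by simp
      also have "\<dots> \<le> (e / (2 * (norm h + 1))) * norm h"
        by (rule mult_right_mono) (auto simp: t_def)
      also have "\<dots> = e * (norm h / (2 * (norm h + 1)))" by simp
      also have "\<dots> < e * 1"
      proof (rule mult_strict_left_mono)
        show "norm h / (2 * (norm h + 1)) < 1"
          by (simp add: divide_less_eq) (smt (verit) norm_ge_zero)
      qed (use e in auto)
      also have "\<dots> = e" by simp
      finally show ?thesis .
    qed
    hence "u + t *\<^sub>R h \<in> U" using e by (auto simp: dist_norm)
    moreover have "g (u + t *\<^sub>R h) \<le> 0" using d(2)[OF t] gu by simp
    ultimately have "u + t *\<^sub>R h \<in> X" using XU by blast
    hence "inner v ((u + t *\<^sub>R h) - u) \<le> 0" using nv by (rule bspec[rotated])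
    hence "inner v (t *\<^sub>R h) \<le> 0" by simp
    thus ?thesis using t by (simp add: mult_le_0_iff)
  qed
  have "a \<noteq> 0" using G0 a_def by simp
  moreover have "\<exists>c\<ge>0. v = c *\<^sub>R a" if nv: "\<forall>y\<in>X. inner v (y - u) \<le> 0" for v
  proof -
    have aa: "inner a a > 0" using \<open>a \<noteq> 0\<close> by simp
    have va: "inner v a \<ge> 0" using key[OF nv, of "-a"] aa by simp
    define c where "c = inner v a / inner a a"
    define h0 where "h0 = v - c *\<^sub>R a"
    have ah0: "inner a h0 = 0" using aa by (simp add: h0_def c_def inner_diff_right inner_commute[of a v])
    have "inner v h0 \<le> 0"
    proof (rule small_le0[of _ "inner v a"])
      fix e :: real assume "e > 0"
      have "inner a (h0 - e *\<^sub>R a) < 0" using ah0 aa \<open>e>0\<close> by (simp add: inner_diff_right)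
      from key[OF nv this] show "inner v h0 \<le> e * inner v a" by (simp add: inner_diff_right)
    qed
    moreover have "- inner v h0 \<le> 0"
    proof (rule small_le0[of _ "inner v a"])
      fix e :: real assume "e > 0"
      have "inner a (- h0 - e *\<^sub>R a) < 0" using ah0 aa \<open>e>0\<close> by (simp add: inner_diff_right)
      from key[OF nv this] show "- inner v h0 \<le> e * inner v a" by (simp add: inner_diff_right)
    qed
    ultimately have "inner v h0 = 0" by simp
    have "inner h0 h0 = inner (v - c *\<^sub>R a) h0" by (simp add: h0_def)
    also have "\<dots> = inner v h0 - c * inner a h0" by (simp add: inner_diff_left)
    finally have "inner h0 h0 = 0" using ah0 \<open>inner v h0 = 0\<close> by simp
    hence "v = c *\<^sub>R a" by (simp add: h0_def)
    moreover have "c \<ge> 0" using va aa by (simp add: c_def)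
    ultimately show ?thesis by blast
  qed
  ultimately show ?thesis by blast
qed



lemma polar_mem:
  assumes "sym_self_polar X"
  shows "y \<in> X \<longleftrightarrow> (\<forall>x\<in>X. omega x y \<le> 1)"
proof -
  have "X = sym_polar X" using assms unfolding sym_self_polar_def by blast
  hence "y \<in> X \<longleftrightarrow> y \<in> sym_polar X" by simp
  thus ?thesis by (simp add: sym_polar_def)
qed

lemma omega_le1:
  assumes "sym_self_polar X" "x \<in> X" "y \<in> X" shows "omega x y \<le> 1"
  using polar_mem[OF assms(1), of y] assms(2,3) by blast

lemma neg_mem:
  assumes "sym_self_polar X" "y \<in> X" shows "- y \<in> X"
proof -
  have "omega x (- y) \<le> 1" if "x \<in> X" for x
  proof -
    have "omega y x \<le> 1" using omega_le1[OF assms(1) assms(2) that] .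
    thus ?thesis using omega_antisym[of x y] by simp
  qed
  thus ?thesis using polar_mem[OF assms(1)] by blast
qed

lemma closedX: "sym_self_polar X \<Longrightarrow> closed X"
  unfolding sym_self_polar_def convex_body_def using compact_imp_closed by blast

lemma interior_scale:
  fixes x :: "'a::real_normed_vector"
  assumes "x \<in> interior X" shows "\<exists>e>0. (1 + e) *\<^sub>R x \<in> X"
proof -
  obtain r where r: "r > 0" "ball x r \<subseteq> X"
    using assms by (meson mem_interior)
  define e where "e = r / (2 * (norm x + 1))"
  have e: "e > 0" using r(1) unfolding e_def by (smt (verit) divide_pos_pos norm_ge_zero)
  have "norm ((1 + e) *\<^sub>R x - x) = e * norm x" using e by (simp add: algebra_simps)
  also have "\<dots> < r"
  proof -
    have "e * norm x = r * (norm x / (2 * (norm x + 1)))" by (simp add: e_def)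
    also have "\<dots> < r * 1"
    proof (rule mult_strict_left_mono)
      show "norm x / (2 * (norm x + 1)) < 1"
        by (simp add: divide_less_eq) (smt (verit) norm_ge_zero)
    qed (use r in auto)
    finally show ?thesis by simp
  qed
  finally have "(1 + e) *\<^sub>R x \<in> ball x r" by (simp add: dist_norm norm_minus_commute)
  thus ?thesis using r e by blast
qed

lemma frontier_of_pair:
  assumes S: "sym_self_polar X" and x: "x \<in> X" and y: "y \<in> X" and xy: "omega x y = 1"
  shows "x \<in> frontier X" "y \<in> frontier X"
proof -
  have cl: "closed X" using closedX[OF S] .
  have "x \<notin> interior X"
  proof
    assume "x \<in> interior X"
    then obtain e where e: "e > 0" "(1 + e) *\<^sub>R x \<in> X" using interior_scale by blast
    have "omega ((1 + e) *\<^sub>R x) y \<le> 1" using omega_le1[OF S e(2) y] .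
    thus False using xy e(1) by simp
  qed
  thus "x \<in> frontier X" using x cl by (simp add: frontier_def closure_closed)
  have "y \<notin> interior X"
  proof
    assume "y \<in> interior X"
    then obtain e where e: "e > 0" "(1 + e) *\<^sub>R y \<in> X" using interior_scale by blast
    have "omega x ((1 + e) *\<^sub>R y) \<le> 1" using omega_le1[OF S x e(2)] .
    thus False using xy e(1) by simp
  qed
  thus "y \<in> frontier X" using y cl by (simp add: frontier_def closure_closed)
qed

lemma normal_of: "inner (- cJ y) x = omega x y"
  using omega_antisym[of y x] by (simp add: omega_def)

lemma normal_prop:
  assumes S: "sym_self_polar X" and y: "y \<in> X" and uy: "omega u y = 1"
  shows "\<forall>x'\<in>X. inner (- cJ y) (x' - u) \<le> 0"
proof
  fix x' assume "x' \<in> X"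
  hence "omega x' y \<le> 1" using omega_le1[OF S _ y] by blast
  moreover have "inner (- cJ y) (x' - u) = omega x' y - omega u y"
    by (simp only: inner_diff_right normal_of)
  ultimately show "inner (- cJ y) (x' - u) \<le> 0" using uy by simp
qed

lemma existence:
  assumes S: "sym_self_polar X" and u: "u \<in> frontier X"
  shows "\<exists>y\<in>X. omega u y = 1"
proof -
  have cb: "convex X" "compact X" "0 \<in> interior X"
    using S unfolding sym_self_polar_def convex_body_def by blast+
  have cl: "closed X" using closedX[OF S] .
  have ne: "interior X \<noteq> {}" using cb(3) by auto
  have ri: "rel_interior X = interior X" by (rule rel_interior_nonempty_interior[OF ne])
  have uc: "u \<in> closure X" "u \<notin> rel_interior X" using u ri by (auto simp: frontier_def)
  obtain a where a: "a \<noteq> 0" "\<And>y. y \<in> closure X \<Longrightarrow> inner a u \<le> inner a y"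
    using supporting_hyperplane_relative_frontier[OF cb(1) uc] by metis
  define b where "b = - a"
  have b1: "b \<noteq> 0" using a(1) by (simp add: b_def)
  have b2: "inner b y \<le> inner b u" if "y \<in> X" for y
  proof -
    have "y \<in> closure X" using that closure_subset by blast
    hence "inner a u \<le> inner a y" by (rule a(2))
    thus ?thesis by (simp add: b_def)
  qed
  note b = b1 b2
  obtain r where r: "r > 0" "ball 0 r \<subseteq> X" using cb(3) by (meson mem_interior)
  define y0 where "y0 = (r / (2 * norm b)) *\<^sub>R b"
  have "norm y0 < r" using r(1) b(1) by (simp add: y0_def)
  hence "y0 \<in> X" using r by auto
  hence "inner b y0 \<le> inner b u" using b by blast
  moreover have "inner b y0 > 0"
    using r(1) b(1) by (simp add: y0_def)
  ultimately have c: "inner b u > 0" by simp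
  define c where "c = inner b u"
  define w where "w = cJ ((1 / c) *\<^sub>R b)"
  have ow: "omega y w = inner y b / c" for y
    by (simp add: w_def omega_def inner_cJ_cJ cJ_scale divide_inverse mult.commute)
  have "w \<in> X"
  proof -
    have "omega y w \<le> 1" if "y \<in> X" for y
      using b(2)[OF that] c by (simp add: ow c_def inner_commute)
    thus ?thesis using polar_mem[OF S] by blast
  qed
  moreover have "omega u w = 1" using c by (simp add: ow c_def inner_commute)
  ultimately show ?thesis by blast
qed

lemma uniq_face:
  assumes S: "sym_self_polar X" and C1: "C1_boundary X" and u: "u \<in> frontier X"
    and y1: "y1 \<in> X" "omega u y1 = 1" and y2: "y2 \<in> X" "omega u y2 = 1"
  shows "y1 = y2"
proof -
  obtain a where a: "a \<noteq> 0" "\<And>v. (\<forall>y\<in>X. inner v (y - u) \<le> 0) \<Longrightarrow> (\<exists>c\<ge>0. v = c *\<^sub>R a)"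
    using normal_dir[OF C1 u closedX[OF S]] by blast
  obtain c1 where c1: "- cJ y1 = c1 *\<^sub>R a" using a(2)[OF normal_prop[OF S y1]] by blast
  obtain c2 where c2: "- cJ y2 = c2 *\<^sub>R a" using a(2)[OF normal_prop[OF S y2]] by blast
  have inv: "y = cJ (- cJ y)" for y by (simp add: cJ_minus cJ_cJ)
  have e1: "y1 = c1 *\<^sub>R cJ a" using inv[of y1] c1 by (simp add: cJ_scale)
  have e2: "y2 = c2 *\<^sub>R cJ a" using inv[of y2] c2 by (simp add: cJ_scale)
  have "c1 * omega u (cJ a) = 1" using y1(2) e1 by simp
  moreover have "c2 * omega u (cJ a) = 1" using y2(2) e2 by simp
  ultimately have "c1 * omega u (cJ a) = c2 * omega u (cJ a)" "omega u (cJ a) \<noteq> 0" by auto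
  hence "c1 = c2" by simp
  thus ?thesis using e1 e2 by simp
qed

lemma outer_normal_eq:
  assumes S: "sym_self_polar X" and C1: "C1_boundary X" and u: "u \<in> frontier X"
    and y: "y \<in> X" "omega u y = 1"
  shows "outer_normal X u = (1 / norm y) *\<^sub>R (- cJ y)"
proof -
  have y0: "y \<noteq> 0" using y(2) by auto
  obtain a where a: "a \<noteq> 0" "\<And>v. (\<forall>y\<in>X. inner v (y - u) \<le> 0) \<Longrightarrow> (\<exists>c\<ge>0. v = c *\<^sub>R a)"
    using normal_dir[OF C1 u closedX[OF S]] by blast
  define n where "n = (1 / norm y) *\<^sub>R (- cJ y)"
  have nn: "norm n = 1" using y0 by (simp add: n_def norm_cJ)
  have np: "\<forall>x'\<in>X. inner n (x' - u) \<le> 0"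
  proof
    fix x' assume "x' \<in> X"
    hence "inner (- cJ y) (x' - u) \<le> 0" using normal_prop[OF S y] by blast
    thus "inner n (x' - u) \<le> 0" by (simp add: n_def mult_nonpos_nonneg)
  qed
  have "outer_normal X u = n"
    unfolding outer_normal_def
  proof (rule the_equality)
    show "norm n = 1 \<and> (\<forall>y\<in>X. inner n (y - u) \<le> 0)" using nn np by blast
  next
    fix m assume m: "norm m = 1 \<and> (\<forall>y\<in>X. inner m (y - u) \<le> 0)"
    obtain c where c: "c \<ge> 0" "m = c *\<^sub>R a" using a(2) m by blast
    obtain d where d: "d \<ge> 0" "n = d *\<^sub>R a" using a(2)[OF np] by blast
    have "c * norm a = 1" using m c by simp
    moreover have "d * norm a = 1" using nn d by simp
    ultimately have "c * norm a = d * norm a" "norm a \<noteq> 0" using a(1) by auto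
    hence "c = d" by simp
    thus "m = n" using c d by simp
  qed
  thus ?thesis by (simp add: n_def)
qed

definition billiard_pt where
  "billiard_pt X z p \<longleftrightarrow> p \<in> frontier X \<and>
     (\<exists>t::real. z - p = t *\<^sub>R cJ (outer_normal X p)) \<and> omega p (p - z) > 0"

lemma billiard_intro:
  assumes S: "sym_self_polar X" and C1: "C1_boundary X" and p: "p \<in> frontier X"
    and q: "q \<in> X" "omega p q = 1"
  shows "billiard_pt X (p - q) p"
proof -
  have q0: "q \<noteq> 0" using q(2) by auto
  have on: "cJ (outer_normal X p) = (1 / norm q) *\<^sub>R q"
    using outer_normal_eq[OF S C1 p q] by (simp add: cJ_scale cJ_minus cJ_cJ)
  have "(p - q) - p = (- norm q) *\<^sub>R ((1 / norm q) *\<^sub>R q)" using q0 by simp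
  hence "\<exists>t::real. (p - q) - p = t *\<^sub>R cJ (outer_normal X p)" unfolding on by blast
  moreover have "omega p (p - (p - q)) > 0" using q(2) by simp
  ultimately show ?thesis using p by (simp add: billiard_pt_def)
qed

lemma billiard_elim:
  assumes S: "sym_self_polar X" and C1: "C1_boundary X" and b: "billiard_pt X z p"
    and q: "q \<in> X" "omega p q = 1"
  shows "\<exists>s<0. z = p + s *\<^sub>R q"
proof -
  have p: "p \<in> frontier X" using b by (simp add: billiard_pt_def)
  have q0: "q \<noteq> 0" using q(2) by auto
  have on: "cJ (outer_normal X p) = (1 / norm q) *\<^sub>R q"
    using outer_normal_eq[OF S C1 p q] by (simp add: cJ_scale cJ_minus cJ_cJ)
  obtain t where t: "z - p = t *\<^sub>R ((1 / norm q) *\<^sub>R q)" using b unfolding billiard_pt_def on by blast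
  define s where "s = t / norm q"
  have zs: "z = p + s *\<^sub>R q" using t by (simp add: s_def algebra_simps)
  have "omega p (p - z) > 0" using b by (simp add: billiard_pt_def)
  hence "s < 0" using zs q(2) by simp
  thus ?thesis using zs by blast
qed

lemma billiard_uniq:
  assumes S: "sym_self_polar X" and C1: "C1_boundary X"
    and bp: "billiard_pt X z p" and bq: "billiard_pt X z q"
  shows "p = q"
proof -
  have cl: "closed X" using closedX[OF S] .
  have p: "p \<in> frontier X" and q: "q \<in> frontier X" using bp bq by (simp_all add: billiard_pt_def)
  have pX: "p \<in> X" and qX: "q \<in> X" using p q cl by (auto simp: frontier_def closure_closed)
  obtain yp where yp: "yp \<in> X" "omega p yp = 1" using existence[OF S p] by blast
  obtain yq where yq: "yq \<in> X" "omega q yq = 1" using existence[OF S q] by blast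
  obtain s where s: "s < 0" "z = p + s *\<^sub>R yp" using billiard_elim[OF S C1 bp yp] by blast
  obtain r where r: "r < 0" "z = q + r *\<^sub>R yq" using billiard_elim[OF S C1 bq yq] by blast
  have qe: "q = p + s *\<^sub>R yp - r *\<^sub>R yq" using s r by (simp add: algebra_simps)
  have pe: "p = q + r *\<^sub>R yq - s *\<^sub>R yp" using s r by (simp add: algebra_simps)
  have a1: "omega q yp \<le> 1" using omega_le1[OF S qX yp(1)] .
  have a2: "omega p yq \<le> 1" using omega_le1[OF S pX yq(1)] .
  have "omega q yp = 1 - r * omega yq yp" using yp(2) by (subst qe) simp
  hence w1: "r * omega yq yp \<ge> 0" using a1 by simp
  have "omega p yq = 1 - s * omega yp yq" using yq(2) by (subst pe) simp
  hence w2: "s * omega yp yq \<ge> 0" using a2 by simp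
  have "omega yq yp \<le> 0" using w1 r(1) by (simp add: mult_le_0_iff zero_le_mult_iff)
  moreover have "omega yp yq \<le> 0" using w2 s(1) by (simp add: zero_le_mult_iff)
  ultimately have "omega yq yp = 0" using omega_antisym[of yq yp] by simp
  hence qyp: "omega q yp = 1" using \<open>omega q yp = 1 - r * omega yq yp\<close> by simp
  have ypf: "yp \<in> frontier X" using frontier_of_pair[OF S pX yp] by blast
  have "- q = - p"
  proof (rule uniq_face[OF S C1 ypf])
    show "- q \<in> X" "- p \<in> X" using neg_mem[OF S] qX pX by auto
    show "omega yp (- q) = 1" using qyp omega_antisym[of yp q] by simp
    show "omega yp (- p) = 1" using yp(2) omega_antisym[of yp p] by simp
  qed
  thus ?thesis by simp
qed

lemma billiard_value:
  assumes S: "sym_self_polar X" and C1: "C1_boundary X" and b: "billiard_pt X z p"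
  shows "outer_billiard X z = 2 *\<^sub>R p - z"
proof -
  have "(THE x. x \<in> frontier X \<and> (\<exists>t::real. z - x = t *\<^sub>R cJ (outer_normal X x)) \<and>
          omega x (x - z) > 0) = p"
  proof (rule the_equality)
    show "p \<in> frontier X \<and> (\<exists>t::real. z - p = t *\<^sub>R cJ (outer_normal X p)) \<and> omega p (p - z) > 0"
      using b by (simp add: billiard_pt_def)
  next
    fix x assume "x \<in> frontier X \<and> (\<exists>t::real. z - x = t *\<^sub>R cJ (outer_normal X x)) \<and> omega x (x - z) > 0"
    hence "billiard_pt X z x" by (simp add: billiard_pt_def)
    thus "x = p" using billiard_uniq[OF S C1 _ b] by blast
  qed
  thus ?thesis by (simp add: outer_billiard_def Let_def)
qed

lemma not_in_X:
  assumes S: "sym_self_polar X" and C1: "C1_boundary X"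
    and a: "a \<in> X" "omega z a = 1" and b: "b \<in> X" "omega z b = 1" and ab: "a \<noteq> b"
  shows "z \<notin> X"
proof
  assume z: "z \<in> X"
  have "z \<in> frontier X" using frontier_of_pair[OF S z a] by blast
  thus False using uniq_face[OF S C1 _ a b] ab by blast
qed

lemma polar_map_eq:
  assumes S: "sym_self_polar X" and C1: "C1_boundary X" and u: "u \<in> frontier X"
    and y: "y \<in> X" "omega u y = 1"
  shows "polar_map X u = y"
proof -
  have X: "sym_polar X = X" using S unfolding sym_self_polar_def by blast
  show ?thesis unfolding polar_map_def X
    using uniq_face[OF S C1 u] y by blast
qed



theorem theorem3p1:
  fixes X :: "(complex ^ 'n) set" and x :: "complex ^ 'n"
  assumes "sym_self_polar X"
    and "C1_boundary X"
    and "x \<in> frontier X"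
  defines "z1 \<equiv> x + polar_map X x"
    and "z2 \<equiv> - x + polar_map X x"
    and "z3 \<equiv> - x - polar_map X x"
    and "z4 \<equiv> x - polar_map X x"
  shows "z2 - z1 = z3 - z4 \<and> omega (z2 - z1) (z3 - z2) = 4
     \<and> z1 \<notin> X \<and> z2 \<notin> X \<and> z3 \<notin> X \<and> z4 \<notin> X
     \<and> outer_billiard X z1 = z2 \<and> outer_billiard X z2 = z3
     \<and> outer_billiard X z3 = z4 \<and> outer_billiard X z4 = z1"
proof -
  note S = assms(1) and C1 = assms(2) and xf = assms(3)
  define f where "f = polar_map X x"
  have cl: "closed X" using closedX[OF S] .
  have xX: "x \<in> X" using xf cl by (auto simp: frontier_def closure_closed)
  obtain y where y: "y \<in> X" "omega x y = 1" using existence[OF S xf] by blast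
  have fy: "f = y" unfolding f_def by (rule polar_map_eq[OF S C1 xf y])
  have fX: "f \<in> X" and xf1: "omega x f = 1" using y fy by auto
  have fx1: "omega f x = -1" using xf1 omega_antisym[of f x] by simp
  have nxX: "- x \<in> X" and nfX: "- f \<in> X" using neg_mem[OF S] xX fX by auto
  have ff: "f \<in> frontier X" using frontier_of_pair[OF S xX fX xf1] by blast
  have o2: "omega (- x) (- f) = 1" using xf1 by simp
  have nxf: "- x \<in> frontier X" and nff: "- f \<in> frontier X"
    using frontier_of_pair[OF S nxX nfX o2] by blast+
  have fnx: "f \<noteq> x" using xf1 by auto
  have fnnx: "x \<noteq> - f" using xf1 by auto
  have fnnx2: "f \<noteq> - x" using xf1 by auto
  have z: "z1 = x + f" "z2 = - x + f" "z3 = - x - f" "z4 = x - f"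
    by (simp_all add: z1_def z2_def z3_def z4_def f_def)
  have p1: "z2 - z1 = z3 - z4" by (simp add: z algebra_simps)
  have p2: "omega (z2 - z1) (z3 - z2) = 4"
  proof -
    have eq: "z2 - z1 = - (x + x)" "z3 - z2 = - (f + f)" by (simp_all add: z algebra_simps)
    have "omega (- (x + x)) (- (f + f)) = 4"
      by (simp only: omega_minus_left omega_minus_right omega_add_left omega_add_right xf1)
    thus ?thesis by (simp only: eq)
  qed
  have n1: "z1 \<notin> X"
    by (rule not_in_X[OF S C1 fX _ nxX _]) (use xf1 fx1 fnx fnnx fnnx2 in \<open>simp_all add: z\<close>)
  have n2: "z2 \<notin> X"
    by (rule not_in_X[OF S C1 nfX _ nxX _]) (use xf1 fx1 fnx fnnx fnnx2 in \<open>simp_all add: z\<close>)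
  have n3: "z3 \<notin> X"
    by (rule not_in_X[OF S C1 nfX _ xX _]) (use xf1 fx1 fnx fnnx fnnx2 in \<open>simp_all add: z\<close>)
  have n4: "z4 \<notin> X"
    by (rule not_in_X[OF S C1 fX _ xX _]) (use xf1 fx1 fnx fnnx fnnx2 in \<open>simp_all add: z\<close>)
  have b1: "billiard_pt X (f - (- x)) f"
    by (rule billiard_intro[OF S C1 ff nxX]) (use fx1 in simp)
  have b2: "billiard_pt X (- x - (- f)) (- x)"
    by (rule billiard_intro[OF S C1 nxf nfX]) (use xf1 in simp)
  have b3: "billiard_pt X (- f - x) (- f)"
    by (rule billiard_intro[OF S C1 nff xX]) (use fx1 in simp)
  have b4: "billiard_pt X (x - f) x"
    by (rule billiard_intro[OF S C1 xf fX]) (use xf1 in simp)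
  have e1: "f - (- x) = z1" "- x - (- f) = z2" "- f - x = z3" "x - f = z4"
    by (simp_all add: z algebra_simps)
  have "outer_billiard X z1 = 2 *\<^sub>R (f) - z1" using billiard_value[OF S C1 b1] by (simp only: e1)
  also have "\<dots> = z2" by (simp add: z scaleR_2 algebra_simps)
  finally have t1: "outer_billiard X z1 = z2" .
  have "outer_billiard X z2 = 2 *\<^sub>R (- x) - z2" using billiard_value[OF S C1 b2] by (simp only: e1)
  also have "\<dots> = z3" by (simp add: z scaleR_2 algebra_simps)
  finally have t2: "outer_billiard X z2 = z3" .
  have "outer_billiard X z3 = 2 *\<^sub>R (- f) - z3" using billiard_value[OF S C1 b3] by (simp only: e1)
  also have "\<dots> = z4" by (simp add: z scaleR_2 algebra_simps)
  finally have t3: "outer_billiard X z3 = z4" .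
  have "outer_billiard X z4 = 2 *\<^sub>R (x) - z4" using billiard_value[OF S C1 b4] by (simp only: e1)
  also have "\<dots> = z1" by (simp add: z scaleR_2 algebra_simps)
  finally have t4: "outer_billiard X z4 = z1" .
  show ?thesis using p1 p2 n1 n2 n3 n4 t1 t2 t3 t4 by blast
qed

end
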